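(* Let $f:\mathbb{R}^n\to\mathbb{R}$ be convex and differentiable with $\nabla f$ $L$-Lipschitz continuous, and assume its minimizer set $X^*$ is non-empty. Let $\{x^k\},\{z^k\},\{h_k\}$ be generated by Algorithm 3 with $0\le\beta\le1$, and set $d^k:=h_k\big(\nabla f(x^k)-\beta(\nabla f(x^k)-\nabla f(z^k))\big)$. Then for every $x^*\in X^*$ and every $k$, $$\langle x^k-x^*,d^k\rangle\ge(1-\beta)\Big(1-\frac{Lh_k}{4}\Big)\|x^k-z^k\|^2+\beta\langle x^k-z^k,h_k\nabla f(z^k)\rangle\ge\kappa_3\|x^k-z^k\|^2,$$ where $\kappa_3=(1-\beta)\big(1-\frac{Lh_k}{4}\big)+\beta(1-\nu)>0$.
   Context: $X^*=\{x:\nabla f(x)=0\}$ (the set of minimizers of the convex $f$). Algorithm 3: parameters $0<\mu<\nu<1$, $0<\underline{h}<1\le\gamma_0^0\le\overline{h}<\frac4L$, $0\le\beta\le1$, $\theta\in(0,1)$, $\tau>1$, $\eta\in(0,2)$, starting point $x^0$; run while $\nabla f(x^k)\neq0$. At iteration $k$: for $\gamma>0$ let $z^k(\gamma)=x^k-\gamma\nabla f(x^k)$ and $r_k(\gamma)=\gamma\|\nabla f(z^k(\gamma))-\nabla f(x^k)\|/\|z^k(\gamma)-x^k\|$; starting from $\gamma_0^k$, while $r_k(\gamma_l^k)>\nu$ set $\gamma_{l+1}^k=\gamma_l^k\theta\min\{1,1/r_k(\gamma_l^k)\}$; let $h_k$ be the first $\gamma_l^k$ with $r_k(\gamma_l^k)\le\nu$.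 Then $z^k=x^k-h_k\nabla f(x^k)$ and $x^{k+1}=x^k-\eta\alpha_kh_k\big(\nabla f(x^k)-\beta(\nabla f(x^k)-\nabla f(z^k))\big)$ with $$\alpha_k=\frac{(1-\beta)\left(1-\frac{Lh_k}{4}\right)\|x^k-z^k\|^2+\beta\langle x^k-z^k,h_k\nabla f(z^k)\rangle}{h_k^2\|\nabla f(x^k)-\beta(\nabla f(x^k)-\nabla f(z^k))\|^2};$$ finally $\gamma_0^{k+1}=\mathbf{P}_{[\underline{h},\overline{h}]}(\tau h_k)$ if $r_k(h_k)\le\mu$, else $\gamma_0^{k+1}=\mathbf{P}_{[\underline{h},\overline{h}]}(h_k)$, where $\mathbf{P}_{[a,b]}$ is projection onto $[a,b]$. *)

theory Defs
  imports "HOL-Analysis.Analysis"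
begin

definition alg3_r :: "(real^'n \<Rightarrow> real^'n) \<Rightarrow> real^'n \<Rightarrow> real \<Rightarrow> real" where
  "alg3_r g x \<gamma> =
     \<gamma> * norm (g (x - \<gamma> *\<^sub>R g x) - g x) / norm ((x - \<gamma> *\<^sub>R g x) - x)"

primrec alg3_bt :: "(real^'n \<Rightarrow> real^'n) \<Rightarrow> real^'n \<Rightarrow> real \<Rightarrow> real \<Rightarrow> real \<Rightarrow> nat \<Rightarrow> real" where
  "alg3_bt g x \<nu> \<theta> \<gamma>0 0 = \<gamma>0"
| "alg3_bt g x \<nu> \<theta> \<gamma>0 (Suc l) =
     (let \<gamma> = alg3_bt g x \<nu> \<theta> \<gamma>0 l in
      if alg3_r g x \<gamma> > \<nu> then \<gamma> * \<theta> * min 1 (1 / alg3_r g x \<gamma>) else \<gamma>)"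

definition proj_int :: "real \<Rightarrow> real \<Rightarrow> real \<Rightarrow> real" where
  "proj_int a b t = max a (min b t)"

definition alg3_step ::
  "(real^'n \<Rightarrow> real^'n) \<Rightarrow> real \<Rightarrow> real \<Rightarrow> real \<Rightarrow> real \<Rightarrow> real \<Rightarrow> real \<Rightarrow> real \<Rightarrow> real \<Rightarrow> real
   \<Rightarrow> real^'n \<Rightarrow> real \<Rightarrow> real \<Rightarrow> real^'n \<Rightarrow> real^'n \<Rightarrow> real \<Rightarrow> bool" where
  "alg3_step g L \<mu> \<nu> hl hu \<beta> \<theta> \<tau> \<eta> xk \<gamma>0k hk zk xk1 \<gamma>0k1 \<longleftrightarrow>
     (\<exists>l. hk = alg3_bt g xk \<nu> \<theta> \<gamma>0k l \<and> alg3_r g xk (alg3_bt g xk \<nu> \<theta> \<gamma>0k l) \<le> \<nu>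
          \<and> (\<forall>j<l. alg3_r g xk (alg3_bt g xk \<nu> \<theta> \<gamma>0k j) > \<nu>))
   \<and> zk = xk - hk *\<^sub>R g xk
   \<and> (let D = g xk - \<beta> *\<^sub>R (g xk - g zk);
          \<alpha> = ((1 - \<beta>) * (1 - L * hk / 4) * (norm (xk - zk))\<^sup>2
                 + \<beta> * inner (xk - zk) (hk *\<^sub>R g zk))
               / (hk\<^sup>2 * (norm D)\<^sup>2)
      in xk1 = xk - (\<eta> * \<alpha> * hk) *\<^sub>R D)
   \<and> \<gamma>0k1 = (if alg3_r g xk hk \<le> \<mu> then proj_int hl hu (\<tau> * hk) else proj_int hl hu hk)"

end

theory Submission
  imports Defs
begin

lemma grad_ineq:
  fixes f :: "'a::real_inner \<Rightarrow> real"
  assumes conv: "convex_on UNIV f"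
    and grad: "\<And>y. (f has_derivative (\<lambda>v. inner (g y) v)) (at y)"
  shows "f y \<ge> f x + inner (g x) (y - x)"
proof -
  define v where "v = y - x"
  define \<phi> where "\<phi> = (\<lambda>t::real. f (x + t *\<^sub>R v))"
  have cphi: "convex_on UNIV \<phi>"
  proof (rule convex_onI)
    fix t a b :: real assume t: "t > 0" "t < 1"
    have "x + ((1 - t) *\<^sub>R a + t *\<^sub>R b) *\<^sub>R v = (1 - t) *\<^sub>R (x + a *\<^sub>R v) + t *\<^sub>R (x + b *\<^sub>R v)"
      by (simp add: algebra_simps)
    then show "\<phi> ((1 - t) *\<^sub>R a + t *\<^sub>R b) \<le> (1 - t) * \<phi> a + t * \<phi> b"
      unfolding \<phi>_def using convex_onD[OF conv, of t] t by simp
  qed simp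
  have d1: "((\<lambda>t::real. x + t *\<^sub>R v) has_derivative (\<lambda>t. t *\<^sub>R v)) (at 0)"
    by (auto intro!: derivative_eq_intros)
  have "(\<phi> has_derivative (\<lambda>t. inner (g (x + 0 *\<^sub>R v)) (t *\<^sub>R v))) (at 0)"
    unfolding \<phi>_def using has_derivative_compose[OF d1 grad] by (simp add: o_def)
  moreover have "(\<lambda>t. inner (g (x + 0 *\<^sub>R v)) (t *\<^sub>R v)) = (*) (inner (g x) v)"
    by (auto simp: fun_eq_iff)
  ultimately have "(\<phi> has_field_derivative (inner (g x) v)) (at 0 within UNIV)"
    by (simp add: has_field_derivative_def)
  from convex_on_imp_above_tangent[OF cphi _ _ _ this, of 1]
  have "\<phi> 1 - \<phi> 0 \<ge> inner (g x) v" by simp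
  then show ?thesis unfolding \<phi>_def v_def by simp
qed

lemma descent:
  fixes F :: "'a::real_inner \<Rightarrow> real"
  assumes grad: "\<And>y. (F has_derivative (\<lambda>v. inner (G y) v)) (at y)"
    and Lip: "\<And>y w. norm (G y - G w) \<le> L * norm (y - w)"
    and L: "L \<ge> 0"
  shows "F (y + v) \<le> F y + inner (G y) v + L / 2 * (norm v)\<^sup>2"
proof -
  define \<psi> where "\<psi> = (\<lambda>t::real. F (y + t *\<^sub>R v) - t * inner (G y) v - L / 2 * t\<^sup>2 * (norm v)\<^sup>2)"
  have "\<psi> 1 \<le> \<psi> 0"
  proof (rule DERIV_nonpos_imp_nonincreasing[of 0 1])
    fix t :: real assume t: "0 \<le> t" "t \<le> 1"
    have d1: "((\<lambda>t::real. y + t *\<^sub>R v) has_derivative (\<lambda>s. s *\<^sub>R v)) (at t)"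
      by (auto intro!: derivative_eq_intros)
    have "((\<lambda>t. F (y + t *\<^sub>R v)) has_derivative (\<lambda>s. inner (G (y + t *\<^sub>R v)) (s *\<^sub>R v))) (at t)"
      using has_derivative_compose[OF d1 grad] by (simp add: o_def)
    moreover have "(\<lambda>s. inner (G (y + t *\<^sub>R v)) (s *\<^sub>R v)) = (*) (inner (G (y + t *\<^sub>R v)) v)"
      by (auto simp: fun_eq_iff)
    ultimately have dF: "((\<lambda>t. F (y + t *\<^sub>R v)) has_real_derivative inner (G (y + t *\<^sub>R v)) v) (at t)"
      by (simp add: has_field_derivative_def)
    have "(\<psi> has_real_derivative (inner (G (y + t *\<^sub>R v)) v - inner (G y) v - L / 2 * (2 * t) * (norm v)\<^sup>2)) (at t)"
      unfolding \<psi>_def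
      by (rule derivative_eq_intros dF | simp)+
    moreover have "inner (G (y + t *\<^sub>R v)) v - inner (G y) v - L / 2 * (2 * t) * (norm v)\<^sup>2 \<le> 0"
    proof -
      have "inner (G (y + t *\<^sub>R v)) v - inner (G y) v = inner (G (y + t *\<^sub>R v) - G y) v"
        by (simp add: inner_diff_left)
      also have "\<dots> \<le> norm (G (y + t *\<^sub>R v) - G y) * norm v" by (rule norm_cauchy_schwarz)
      also have "\<dots> \<le> L * norm (t *\<^sub>R v) * norm v"
        using Lip[of "y + t *\<^sub>R v" y] by (simp add: mult_right_mono)
      also have "\<dots> = L / 2 * (2 * t) * (norm v)\<^sup>2" using t by (simp add: power2_eq_square)
      finally show ?thesis by simp
    qed
    ultimately show "\<exists>y. (\<psi> has_real_derivative y) (at t) \<and> y \<le> 0" by blast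
  qed simp
  then show ?thesis unfolding \<psi>_def by simp
qed

lemma cocoercive:
  fixes f :: "'a::real_inner \<Rightarrow> real"
  assumes conv: "convex_on UNIV f"
    and grad: "\<And>y. (f has_derivative (\<lambda>v. inner (g y) v)) (at y)"
    and Lip: "\<And>y w. norm (g y - g w) \<le> L * norm (y - w)"
    and L: "L > 0" and opt: "g xs = 0"
  shows "inner (x - xs) (g x) \<ge> (norm (g x))\<^sup>2 / L"
proof -
  have n2: "inner (g x) (g x) = (norm (g x))\<^sup>2" by (simp add: power2_norm_eq_inner)
  have A: "f (x + (- (1/L) *\<^sub>R g x)) \<le> f x + inner (g x) (- (1/L) *\<^sub>R g x) + L / 2 * (norm (- (1/L) *\<^sub>R g x))\<^sup>2"
    by (rule descent[OF grad Lip]) (use L in simp)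
  have A2: "f x + inner (g x) (- (1/L) *\<^sub>R g x) + L / 2 * (norm (- (1/L) *\<^sub>R g x))\<^sup>2
      = f x - (norm (g x))\<^sup>2 / (2 * L)"
    using L by (simp add: n2 power_mult_distrib field_simps power2_eq_square)
  have B: "f (x + (- (1/L) *\<^sub>R g x)) \<ge> f xs"
    using grad_ineq[OF conv grad, of xs] opt by simp
  define \<phi> where "\<phi> = (\<lambda>y. f y - inner (g x) y)"
  have gphi: "\<And>y. (\<phi> has_derivative (\<lambda>v. inner (g y - g x) v)) (at y)"
    unfolding \<phi>_def inner_diff_left
    by (rule derivative_eq_intros grad | simp)+
  have Lphi: "\<And>y w. norm ((g y - g x) - (g w - g x)) \<le> L * norm (y - w)" using Lip by simp
  have C: "\<phi> (xs + (1/L) *\<^sub>R g x) \<le> \<phi> xs + inner (g xs - g x) ((1/L) *\<^sub>R g x) + L / 2 * (norm ((1/L) *\<^sub>R g x))\<^sup>2"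
    by (rule descent[OF gphi Lphi]) (use L in simp)
  have C2: "\<phi> xs + inner (g xs - g x) ((1/L) *\<^sub>R g x) + L / 2 * (norm ((1/L) *\<^sub>R g x))\<^sup>2
     = \<phi> xs - (norm (g x))\<^sup>2 / (2 * L)"
    using L opt by (simp add: n2 power_mult_distrib field_simps power2_eq_square)
  have D: "\<phi> (xs + (1/L) *\<^sub>R g x) \<ge> \<phi> x"
    using grad_ineq[OF conv grad, of x "xs + (1/L) *\<^sub>R g x"] unfolding \<phi>_def
    by (simp add: inner_diff_right)
  have "f x - inner (g x) x \<le> f xs - inner (g x) xs - (norm (g x))\<^sup>2 / (2 * L)"
    using C C2 D unfolding \<phi>_def by linarith
  then have "inner (g x) (x - xs) \<ge> (norm (g x))\<^sup>2 / (2 * L) + (norm (g x))\<^sup>2 / (2 * L)"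
    using A A2 B by (simp add: inner_diff_right)
  then show ?thesis by (simp add: inner_commute)
qed


lemma bt_bounds:
  assumes "0 < \<gamma>0" "0 < \<nu>" "0 < \<theta>" "\<theta> < 1"
  shows "0 < alg3_bt g x \<nu> \<theta> \<gamma>0 l \<and> alg3_bt g x \<nu> \<theta> \<gamma>0 l \<le> \<gamma>0"
proof (induction l)
  case 0 then show ?case using assms by simp
next
  case (Suc l)
  define \<gamma> where "\<gamma> = alg3_bt g x \<nu> \<theta> \<gamma>0 l"
  define r where "r = alg3_r g x \<gamma>"
  show ?case
  proof (cases "r > \<nu>")
    case True
    then have r: "r > 0" using assms by simp
    have m: "0 < min 1 (1 / r)" "min 1 (1 / r) \<le> 1" using r by auto
    have "0 < \<gamma> * \<theta> * min 1 (1 / r)" using Suc m assms unfolding \<gamma>_def by simp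
    moreover have "\<gamma> * \<theta> * min 1 (1 / r) \<le> \<gamma> * 1 * 1"
      using Suc m assms unfolding \<gamma>_def
      by (intro mult_mono) auto
    then have "\<gamma> * \<theta> * min 1 (1 / r) \<le> \<gamma>0" using Suc unfolding \<gamma>_def by linarith
    ultimately show ?thesis using True Suc unfolding \<gamma>_def r_def by (simp add: Let_def)
  next
    case False
    then show ?thesis using Suc unfolding \<gamma>_def r_def by (simp add: Let_def)
  qed
qed

theorem lemma6:
  fixes f :: "real^'n \<Rightarrow> real" and g :: "real^'n \<Rightarrow> real^'n"
    and L \<mu> \<nu> hl hu \<beta> \<theta> \<tau> \<eta> :: real
    and x z :: "nat \<Rightarrow> real^'n" and h \<gamma>0 :: "nat \<Rightarrow> real"
  assumes conv: "convex_on UNIV f"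
    and grad: "\<And>y. (f has_derivative (\<lambda>v. inner (g y) v)) (at y)"
    and Lpos: "L > 0"
    and Lip: "\<And>y w. norm (g y - g w) \<le> L * norm (y - w)"
    and Xne: "\<exists>xs. g xs = 0"
    and par_mu: "0 < \<mu>" "\<mu> < \<nu>" "\<nu> < 1"
    and par_h: "0 < hl" "hl < 1" "1 \<le> \<gamma>0 0" "\<gamma>0 0 \<le> hu" "hu < 4 / L"
    and par_beta: "0 \<le> \<beta>" "\<beta> \<le> 1"
    and par_theta: "0 < \<theta>" "\<theta> < 1"
    and par_tau: "\<tau> > 1"
    and par_eta: "0 < \<eta>" "\<eta> < 2"
    and gen: "\<And>k. (\<forall>j\<le>k. g (x j) \<noteq> 0) \<Longrightarrow>
               alg3_step g L \<mu> \<nu> hl hu \<beta> \<theta> \<tau> \<eta> (x k) (\<gamma>0 k) (h k) (z k) (x (Suc k)) (\<gamma>0 (Suc k))"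
    and run: "\<forall>j\<le>k. g (x j) \<noteq> 0"
    and opt: "g xs = 0"
  shows "inner (x k - xs) (h k *\<^sub>R (g (x k) - \<beta> *\<^sub>R (g (x k) - g (z k))))
           \<ge> (1 - \<beta>) * (1 - L * h k / 4) * (norm (x k - z k))\<^sup>2
              + \<beta> * inner (x k - z k) (h k *\<^sub>R g (z k))
       \<and> (1 - \<beta>) * (1 - L * h k / 4) * (norm (x k - z k))\<^sup>2
              + \<beta> * inner (x k - z k) (h k *\<^sub>R g (z k))
           \<ge> ((1 - \<beta>) * (1 - L * h k / 4) + \<beta> * (1 - \<nu>)) * (norm (x k - z k))\<^sup>2
       \<and> (1 - \<beta>) * (1 - L * h k / 4) + \<beta> * (1 - \<nu>) > 0"
  proof -
  have hlhu: "hl \<le> hu" using par_h by linarith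
  have g0: "\<And>k'. k' \<le> k \<Longrightarrow> 0 < \<gamma>0 k' \<and> \<gamma>0 k' \<le> hu"
  proof -
    fix k' assume "k' \<le> k"
    then show "0 < \<gamma>0 k' \<and> \<gamma>0 k' \<le> hu"
    proof (induction k')
      case 0 then show ?case using par_h by simp
    next
      case (Suc k')
      have "\<forall>j\<le>k'. g (x j) \<noteq> 0" using run Suc.prems by auto
      from gen[OF this] have "\<gamma>0 (Suc k') = (if alg3_r g (x k') (h k') \<le> \<mu> then proj_int hl hu (\<tau> * h k') else proj_int hl hu (h k'))"
        unfolding alg3_step_def by blast
      then show ?case using hlhu par_h unfolding proj_int_def by auto
    qed
  qed
  from gen[OF run] obtain l where
    hk: "h k = alg3_bt g (x k) \<nu> \<theta> (\<gamma>0 k) l" and rk: "alg3_r g (x k) (h k) \<le> \<nu>"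
    and zk: "z k = x k - h k *\<^sub>R g (x k)"
    unfolding alg3_step_def by auto
  have hpos: "0 < h k" and hhu: "h k \<le> hu"
    using bt_bounds[of "\<gamma>0 k" \<nu> \<theta> g "x k" l] g0[of k] par_mu par_theta hk by auto
  have hL: "L * h k < 4"
  proof -
    have "L * h k \<le> L * hu" using hhu Lpos by simp
    also have "\<dots> < L * (4 / L)" using par_h Lpos by (intro mult_strict_left_mono) auto
    also have "\<dots> = 4" using Lpos by simp
    finally show ?thesis .
  qed
  define gk where "gk = g (x k)"
  define gz where "gz = g (z k)"
  have gk0: "gk \<noteq> 0" using run unfolding gk_def by simp
  have xz: "x k - z k = h k *\<^sub>R gk" using zk unfolding gk_def by simp
  have nxz: "(norm (x k - z k))\<^sup>2 = (h k)\<^sup>2 * (norm gk)\<^sup>2"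
    using xz hpos by (simp add: power_mult_distrib)
  have n2: "inner gk gk = (norm gk)\<^sup>2" by (simp add: power2_norm_eq_inner)
  have coco: "inner (x k - xs) gk \<ge> (norm gk)\<^sup>2 / L"
    unfolding gk_def by (rule cocoercive[OF conv grad Lip Lpos opt])
  have mono: "inner (z k - xs) gz \<ge> 0"
  proof -
    have "f xs \<ge> f (z k) + inner gz (xs - z k)" unfolding gz_def by (rule grad_ineq[OF conv grad])
    moreover have "f (z k) \<ge> f xs + inner (g xs) (z k - xs)" by (rule grad_ineq[OF conv grad])
    ultimately show ?thesis using opt by (simp add: inner_diff_right inner_commute)
  qed
  have q: "1 / L \<ge> (1 - L * h k / 4) * h k"
  proof -
    have "0 \<le> (L * h k / 2 - 1)\<^sup>2 / L" using Lpos by simp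
    also have "(L * h k / 2 - 1)\<^sup>2 / L = 1 / L - (1 - L * h k / 4) * h k"
      using Lpos by (simp add: field_simps power2_eq_square)
    finally show ?thesis by simp
  qed
  have P1a: "(1 - \<beta>) * (h k * inner (x k - xs) gk) \<ge> (1 - \<beta>) * (1 - L * h k / 4) * (norm (x k - z k))\<^sup>2"
  proof -
    have "h k * inner (x k - xs) gk \<ge> h k * ((norm gk)\<^sup>2 / L)"
      using mult_left_mono[OF coco, of "h k"] hpos by simp
    moreover have "h k * ((norm gk)\<^sup>2 / L) \<ge> (1 - L * h k / 4) * (norm (x k - z k))\<^sup>2"
      using mult_right_mono[OF q, of "h k * (norm gk)\<^sup>2"] hpos unfolding nxz by (simp add: field_simps power2_eq_square)
    ultimately have "h k * inner (x k - xs) gk \<ge> (1 - L * h k / 4) * (norm (x k - z k))\<^sup>2" by linarith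
    then show ?thesis using par_beta by (simp add: mult_left_mono mult.assoc)
  qed
  have P1b: "\<beta> * (h k * inner (x k - xs) gz) \<ge> \<beta> * inner (x k - z k) (h k *\<^sub>R gz)"
  proof -
    have "inner (x k - xs) gz = inner (x k - z k) gz + inner (z k - xs) gz"
      by (simp add: inner_diff_left)
    then have "h k * inner (x k - xs) gz \<ge> inner (x k - z k) (h k *\<^sub>R gz)"
      using mono hpos by (simp add: distrib_left)
    then show ?thesis using par_beta by (simp add: mult_left_mono)
  qed
  have lhs: "inner (x k - xs) (h k *\<^sub>R (gk - \<beta> *\<^sub>R (gk - gz)))
      = (1 - \<beta>) * (h k * inner (x k - xs) gk) + \<beta> * (h k * inner (x k - xs) gz)"
    by (simp add: inner_diff_right algebra_simps)
  have part1: "inner (x k - xs) (h k *\<^sub>R (gk - \<beta> *\<^sub>R (gk - gz)))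
      \<ge> (1 - \<beta>) * (1 - L * h k / 4) * (norm (x k - z k))\<^sup>2 + \<beta> * inner (x k - z k) (h k *\<^sub>R gz)"
    unfolding lhs using P1a P1b by linarith
  have rle: "norm (gz - gk) \<le> \<nu> * norm gk"
  proof -
    have "alg3_r g (x k) (h k) = h k * norm (gz - gk) / (h k * norm gk)"
      unfolding alg3_r_def gz_def gk_def zk using hpos by simp
    also have "\<dots> = norm (gz - gk) / norm gk" using hpos by simp
    finally have "norm (gz - gk) / norm gk \<le> \<nu>" using rk by simp
    then show ?thesis using gk0 by (simp add: divide_le_eq)
  qed
  have P2: "inner (x k - z k) (h k *\<^sub>R gz) \<ge> (1 - \<nu>) * (norm (x k - z k))\<^sup>2"
  proof -
    have e: "inner (x k - z k) (h k *\<^sub>R gz) = (h k)\<^sup>2 * ((norm gk)\<^sup>2 + inner gk (gz - gk))"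
      unfolding xz by (simp add: inner_diff_right n2 power2_eq_square)
    have "inner gk (gz - gk) \<ge> - (norm gk * norm (gz - gk))"
      using Cauchy_Schwarz_ineq2[of gk "gz - gk"] by linarith
    moreover have "norm gk * norm (gz - gk) \<le> norm gk * (\<nu> * norm gk)"
      using rle by (simp add: mult_left_mono)
    ultimately have "(norm gk)\<^sup>2 + inner gk (gz - gk) \<ge> (1 - \<nu>) * (norm gk)\<^sup>2"
      by (simp add: power2_eq_square algebra_simps)
    then have "(h k)\<^sup>2 * ((norm gk)\<^sup>2 + inner gk (gz - gk)) \<ge> (h k)\<^sup>2 * ((1 - \<nu>) * (norm gk)\<^sup>2)"
      by (simp add: mult_left_mono)
    then show ?thesis unfolding e nxz by (simp add: algebra_simps)
  qed
  have part2: "(1 - \<beta>) * (1 - L * h k / 4) * (norm (x k - z k))\<^sup>2 + \<beta> * inner (x k - z k) (h k *\<^sub>R gz)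
      \<ge> ((1 - \<beta>) * (1 - L * h k / 4) + \<beta> * (1 - \<nu>)) * (norm (x k - z k))\<^sup>2"
    using mult_left_mono[OF P2, of \<beta>] par_beta by (simp add: algebra_simps)
  have part3: "(1 - \<beta>) * (1 - L * h k / 4) + \<beta> * (1 - \<nu>) > 0"
  proof (cases "\<beta> = 1")
    case True then show ?thesis using par_mu by simp
  next
    case False
    then have "(1 - \<beta>) * (1 - L * h k / 4) > 0" using par_beta hL by simp
    moreover have "\<beta> * (1 - \<nu>) \<ge> 0" using par_beta par_mu by simp
    ultimately show ?thesis by linarith
  qed
  show ?thesis using part1 part2 part3 unfolding gk_def gz_def by blast
qed

end
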